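(* Let $\mathbf{2}=\{\mathbf{0},\mathbf{1}\}$ and let $(\mathrm{Alt},\eta,\mu)$ be the monad on $\mathbf{Set}$ described in the context. Define $\beta:\mathrm{Alt}(\mathbf{2})\to\mathbf{2}$ by $\beta(S)=\mathbf{1}$ if $\{\mathbf{1}\}\in S$ and $\beta(S)=\mathbf{0}$ otherwise. Then $(\mathbf{2},\beta)$ is an Eilenberg–Moore algebra for $\mathrm{Alt}$, i.e. $\beta\circ\eta_{\mathbf{2}}=\mathrm{id}_{\mathbf{2}}$ and $\beta\circ\mu_{\mathbf{2}}=\beta\circ\mathrm{Alt}(\beta)$.
   Context: $\mathbf{Poset}$ is the category of partially ordered sets and monotone maps; $\mathcal{U}:\mathbf{Poset}\to\mathbf{Set}$ forgets the order; $\mathrm{Do}:\mathbf{Set}\to\mathbf{Poset}$ sends $X$ to the discrete poset $(X,=)$ and a function to itself; $\mathrm{Do}\dashv\mathcal{U}$ with unit $\eta^2_X=\mathrm{id}_X$ and counit $\epsilon^2_{(S,\le)}:(S,=)\to(S,\le)$ the identity of $S$. $\mathrm{Up}(X,\le)$ is the set of upward closed subsets of $X$ ordered by $\supseteq$, with $\mathrm{Up}(f)(P)=\{y\mid\exists x\in P,\ f(x)\le y\}$, unit $x\mapsto\{y\mid x\le y\}$, multiplication $S\mapsto\bigcup S$. $\mathrm{Dn}(X,\le)$ is the set of downward closed subsets ordered by $\subseteq$, with $\mathrm{Dn}(f)(P)=\{y\mid\exists x\in P,\ y\le f(x)\}$, unit $x\mapsto\{y\mid y\le x\}$, multiplication $S\mapsto\bigcup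 S$. Let $\lambda_X:\mathrm{Dn}\,\mathrm{Up}(X)\to\mathrm{Up}\,\mathrm{Dn}(X)$, $\lambda_X(S)=\{T\in\mathrm{Dn}(X)\mid\forall s\in S,\ s\cap T\neq\emptyset\}$, and let $(\mathrm{Up}\,\mathrm{Dn},\eta^1,\mu^1)$ be the composite monad with $\eta^1_X=\eta^{\mathrm{Up}}_{\mathrm{Dn}X}\circ\eta^{\mathrm{Dn}}_X$ and $\mu^1_X=\mathrm{Up}(\mu^{\mathrm{Dn}}_X)\circ\mu^{\mathrm{Up}}_{\mathrm{Dn}\mathrm{Dn}X}\circ\mathrm{Up}(\lambda_{\mathrm{Dn}X})$. $\mathrm{Alt}=\mathcal{U}\circ\mathrm{Up}\circ\mathrm{Dn}\circ\mathrm{Do}$ (so $\mathrm{Alt}(X)$ is the set of inclusion-upward-closed families of subsets of $X$), with unit $\eta_X=\mathcal{U}(\eta^1_{\mathrm{Do}X})\circ\eta^2_X$ and multiplication $\mu_X=\mathcal{U}(\mu^1_{\mathrm{Do}X})\circ\mathcal{U}\,\mathrm{Up}\,\mathrm{Dn}(\epsilon^2_{\mathrm{Up}\mathrm{Dn}\mathrm{Do}X})$; this is a monad on $\mathbf{Set}$. *)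

theory Defs
  imports Main
begin

text \<open>Posets are represented by a carrier set together with an order relation.\<close>

definition Up_set :: "'a set \<Rightarrow> ('a \<Rightarrow> 'a \<Rightarrow> bool) \<Rightarrow> 'a set set" where
  "Up_set A le = {P. P \<subseteq> A \<and> (\<forall>x\<in>P. \<forall>y\<in>A. le x y \<longrightarrow> y \<in> P)}"

definition Dn_set :: "'a set \<Rightarrow> ('a \<Rightarrow> 'a \<Rightarrow> bool) \<Rightarrow> 'a set set" where
  "Dn_set A le = {P. P \<subseteq> A \<and> (\<forall>x\<in>P. \<forall>y\<in>A. le y x \<longrightarrow> y \<in> P)}"

definition Up_le :: "'a set \<Rightarrow> 'a set \<Rightarrow> bool" where
  "Up_le P Q \<longleftrightarrow> Q \<subseteq> P"

definition Dn_le :: "'a set \<Rightarrow> 'a set \<Rightarrow> bool" where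
  "Dn_le P Q \<longleftrightarrow> P \<subseteq> Q"

definition Up_map :: "'b set \<Rightarrow> ('b \<Rightarrow> 'b \<Rightarrow> bool) \<Rightarrow> ('a \<Rightarrow> 'b) \<Rightarrow> 'a set \<Rightarrow> 'b set" where
  "Up_map B leB f P = {y \<in> B. \<exists>x\<in>P. leB (f x) y}"

definition Dn_map :: "'b set \<Rightarrow> ('b \<Rightarrow> 'b \<Rightarrow> bool) \<Rightarrow> ('a \<Rightarrow> 'b) \<Rightarrow> 'a set \<Rightarrow> 'b set" where
  "Dn_map B leB f P = {y \<in> B. \<exists>x\<in>P. leB y (f x)}"

definition Up_unit :: "'a set \<Rightarrow> ('a \<Rightarrow> 'a \<Rightarrow> bool) \<Rightarrow> 'a \<Rightarrow> 'a set" where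
  "Up_unit A le x = {y \<in> A. le x y}"

definition Dn_unit :: "'a set \<Rightarrow> ('a \<Rightarrow> 'a \<Rightarrow> bool) \<Rightarrow> 'a \<Rightarrow> 'a set" where
  "Dn_unit A le x = {y \<in> A. le y x}"

definition Up_mult :: "'a set set \<Rightarrow> 'a set" where
  "Up_mult S = \<Union>S"

definition Dn_mult :: "'a set set \<Rightarrow> 'a set" where
  "Dn_mult S = \<Union>S"

text \<open>Distributive law lambda_X : Dn Up X -> Up Dn X.\<close>
definition lam :: "'a set \<Rightarrow> ('a \<Rightarrow> 'a \<Rightarrow> bool) \<Rightarrow> 'a set set \<Rightarrow> 'a set set" where
  "lam A le S = {T \<in> Dn_set A le. \<forall>s\<in>S. s \<inter> T \<noteq> {}}"

definition UD_unit :: "'a set \<Rightarrow> ('a \<Rightarrow> 'a \<Rightarrow> bool) \<Rightarrow> 'a \<Rightarrow> 'a set set" where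
  "UD_unit A le x = Up_unit (Dn_set A le) Dn_le (Dn_unit A le x)"

definition UD_mult :: "'a set \<Rightarrow> ('a \<Rightarrow> 'a \<Rightarrow> bool) \<Rightarrow> 'a set set set set \<Rightarrow> 'a set set" where
  "UD_mult A le S =
     Up_map (Dn_set A le) Dn_le Dn_mult
       (Up_mult
         (Up_map (Up_set (Dn_set (Dn_set A le) Dn_le) Dn_le) Up_le
                 (lam (Dn_set A le) Dn_le) S))"

text \<open>The monad Alt = U o Up o Dn o Do on Set (a set is a carrier A with discrete order).\<close>
definition Alt_set :: "'a set \<Rightarrow> 'a set set set" where
  "Alt_set A = Up_set (Dn_set A (=)) Dn_le"

definition Alt_map :: "'b set \<Rightarrow> ('a \<Rightarrow> 'b) \<Rightarrow> 'a set set \<Rightarrow> 'b set set" where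
  "Alt_map B f P = Up_map (Dn_set B (=)) Dn_le (Dn_map B (=) f) P"

definition Alt_eta :: "'a set \<Rightarrow> 'a \<Rightarrow> 'a set set" where
  "Alt_eta A x = UD_unit A (=) x"

text \<open>mu_X = U(mu1_{Do X}) o U Up Dn (epsilon_{Up Dn Do X}), where epsilon is the identity
  map (Alt X, =) -> (Alt X, order of Up).\<close>
definition Alt_mu :: "'a set \<Rightarrow> 'a set set set set \<Rightarrow> 'a set set" where
  "Alt_mu A S = UD_mult A (=)
     (Up_map (Dn_set (Alt_set A) Up_le) Dn_le (Dn_map (Alt_set A) Up_le id) S)"

text \<open>The two-element set 2 = {0,1} is rendered as bool, with 1 = True, 0 = False.\<close>
definition beta :: "bool set set \<Rightarrow> bool" where
  "beta S = (if {True} \<in> S then True else False)"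

end

theory Submission
  imports Defs
begin
lemma L0: "beta (Alt_eta UNIV b) = b"
  by (auto simp: beta_def Alt_eta_def UD_unit_def Up_unit_def Dn_unit_def Dn_set_def Dn_le_def)
lemma L1: "beta (Alt_map UNIV beta S) \<longleftrightarrow> (\<exists>x\<in>S. \<forall>a\<in>x. {True}\<in>a)"
  unfolding beta_def Alt_map_def Up_map_def Dn_map_def Dn_set_def Dn_le_def
  by (auto split: if_splits)
lemma alt_sub: "S \<in> Alt_set A \<Longrightarrow> x \<in> S \<Longrightarrow> x \<subseteq> A"
  unfolding Alt_set_def Up_set_def Dn_set_def by blast

lemma L2: assumes "S \<in> Alt_set (Alt_set (UNIV::bool set))"
  shows "beta (Alt_mu UNIV S) \<longleftrightarrow> (\<exists>x\<in>S. \<forall>a\<in>x. {True}\<in>a)"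
proof
  assume "beta (Alt_mu UNIV S)"
  then have "{True} \<in> Alt_mu UNIV S" by (simp add: beta_def split: if_splits)
  then obtain T y z where T: "\<Union>T \<subseteq> {True}" "T \<in> z" 
     and z: "z \<subseteq> lam (Dn_set UNIV (=)) Dn_le y"
     and y: "y \<in> Up_map (Dn_set (Alt_set UNIV) Up_le) Dn_le (Dn_map (Alt_set UNIV) Up_le id) S"
    unfolding Alt_mu_def UD_mult_def Up_map_def[of "Dn_set UNIV (=)"] Dn_mult_def Up_mult_def Dn_le_def
      Up_map_def[of "Up_set (Dn_set (Dn_set UNIV (=)) Dn_le) Dn_le"] Up_le_def
    by blast
  from y obtain x where x: "x \<in> S" and xy: "Dn_map (Alt_set UNIV) Up_le id x \<subseteq> y"
    unfolding Up_map_def Dn_le_def by blast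
  have xs: "x \<subseteq> Alt_set UNIV" using alt_sub[OF assms x] .
  have "{True} \<in> a" if a: "a \<in> x" for a
  proof -
    have "a \<in> y" using xy a xs unfolding Dn_map_def Up_le_def by auto
    then have "a \<inter> T \<noteq> {}" using z T unfolding lam_def by auto
    then obtain t where t: "t \<in> a" "t \<subseteq> {True}" using T by blast
    have "a \<in> Alt_set UNIV" using a xs by auto
    then show ?thesis using t unfolding Alt_set_def Up_set_def Dn_set_def Dn_le_def by auto
  qed
  then show "\<exists>x\<in>S. \<forall>a\<in>x. {True}\<in>a" using x by blast
next
  assume "\<exists>x\<in>S. \<forall>a\<in>x. {True}\<in>a"
  then obtain x where x: "x \<in> S" "\<forall>a\<in>x. {True}\<in>a" by blast
  have xs: "x \<subseteq> Alt_set UNIV" using alt_sub[OF assms x(1)] .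
  define D where "D = Dn_map (Alt_set UNIV) Up_le id x"
  have D1: "D \<in> Up_map (Dn_set (Alt_set UNIV) Up_le) Dn_le (Dn_map (Alt_set UNIV) Up_le id) S"
    unfolding Up_map_def Dn_le_def using x(1)
    by (auto simp: D_def Dn_set_def Dn_map_def Up_le_def)
  define L where "L = lam (Dn_set (UNIV::bool set) (=)) Dn_le D"
  have L1: "L \<in> Up_map (Up_set (Dn_set (Dn_set UNIV (=)) Dn_le) Dn_le) Up_le (lam (Dn_set UNIV (=)) Dn_le)
     (Up_map (Dn_set (Alt_set UNIV) Up_le) Dn_le (Dn_map (Alt_set UNIV) Up_le id) S)"
    unfolding Up_map_def[of "Up_set (Dn_set (Dn_set UNIV (=)) Dn_le) Dn_le"]
    using D1 by (auto simp: L_def lam_def Up_set_def Up_le_def Dn_le_def)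
  define T0 where "T0 = {{}, {True}}"
  have T0: "T0 \<in> L"
    unfolding L_def lam_def D_def Dn_map_def Up_le_def T0_def
  proof (intro CollectI conjI ballI)
    show "{{}, {True}} \<in> Dn_set (Dn_set UNIV (=)) Dn_le"
      by (auto simp: Dn_set_def Dn_le_def)
  next
    fix s assume "s \<in> {y \<in> Alt_set UNIV. \<exists>a\<in>x. id a \<subseteq> y}"
    then show "s \<inter> {{}, {True}} \<noteq> {}" using x(2) by auto
  qed
  have U: "T0 \<in> Up_mult (Up_map (Up_set (Dn_set (Dn_set UNIV (=)) Dn_le) Dn_le) Up_le (lam (Dn_set UNIV (=)) Dn_le)
     (Up_map (Dn_set (Alt_set UNIV) Up_le) Dn_le (Dn_map (Alt_set UNIV) Up_le id) S))"
    unfolding Up_mult_def using L1 T0 by blast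
  have "{True} \<in> Alt_mu UNIV S"
    unfolding Alt_mu_def UD_mult_def Up_map_def[of "Dn_set UNIV (=)"]
  proof (intro CollectI conjI bexI[OF _ U])
    show "{True} \<in> Dn_set UNIV (=)" by (simp add: Dn_set_def)
    show "Dn_le (Dn_mult T0) {True}" by (simp add: Dn_le_def Dn_mult_def T0_def)
  qed
  then show "beta (Alt_mu UNIV S)" by (simp add: beta_def)
qed

theorem mainTheorem6:
  shows "(\<forall>b::bool. beta (Alt_eta UNIV b) = b) \<and>
         (\<forall>S \<in> Alt_set (Alt_set (UNIV :: bool set)).
            beta (Alt_mu UNIV S) = beta (Alt_map UNIV beta S))"
proof (intro conjI allI ballI)
  fix b :: bool show "beta (Alt_eta UNIV b) = b" by (rule L0)
next
  fix S assume "S \<in> Alt_set (Alt_set (UNIV :: bool set))"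
  then show "beta (Alt_mu UNIV S) = beta (Alt_map UNIV beta S)" unfolding L1 by (rule L2)
qed

end
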